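(* For any $n\geq 2$ there is a subset $\mathbf{\Pi}$ of permutations on $[n]$ with $|\mathbf{\Pi}|\leq C_0^n$, where $C_0>0$ is a universal constant, having the following property. Let $p\in(0,1/2]$, $\delta\in[1/n,1/2]$, $s\in[-1,0]$, $\nu\in(0,1]$, $L\geq 1$, $T>0$, and let $x\in{\rm Incomp}_n(\delta,\nu)$ be such that $T/2\leq \mathcal{T}_p(x,L)\leq T$. Then there is $\sigma=\sigma(x)\in\mathbf{\Pi}$ such that the vector $\big(\mathbf{Y}_{\sigma(i)}(p,x,L,s)\big)_{i=1}^n$ belongs to $\mathcal A(n,\delta,\nu,T)$.
   Context: Notation and definitions. For $\delta,\nu\in(0,1]$, ${\rm Comp}_n(\delta,\nu)$ is the set of unit vectors $x\in\mathbb{R}^n$ for which there is $y\in\mathbb{R}^n$ with at most $\delta n$ nonzero coordinates and $\|x-y\|_2\leq\nu$; ${\rm Incomp}_n(\delta,\nu):=S^{n-1}\setminus{\rm Comp}_n(\delta,\nu)$. The Lévy concentration function of a real random variable $Z$ is $\mathcal L(Z,t)=\sup_{\lambda\in\mathbb{R}}\mathbb{P}\{|Z-\lambda|\leq t\}$. For $p\in(0,1/2]$, $x\in S^{n-1}$ and $L>0$, the threshold $\mathcal{T}_p(x,L)$ is the supremum of all $t\in(0,1]$ such that $\mathcal L\big(\sum_{i=1}^n b_ix_i,t\big)>Lt$, where $b_1,\dots,b_n$ are independent Bernoulli($p$) random variables (taking value $1$ with probability $p$ and $0$ with probability $1-p$). For $p\in(0,1/2]$, $s\in[-1,0]$, $x\in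 S^{n-1}$, $L\geq1$, $\mathbf{Y}(p,x,L,s)\in\mathbb{Z}^n$ denotes a fixed (chosen once for each $(p,x,L,s)$) integer vector satisfying, with universal constants $C_1,c_1>0$: (a) $\big\|\frac{\sqrt n}{\mathcal{T}_p(x,L)}x-\mathbf{Y}(p,x,L,s)\big\|_\infty\leq1$; (b) $\mathbb{P}\{|\sum_i b_i\mathbf{Y}_i(p,x,L,s)+\frac{s\sqrt n}{\mathcal{T}_p(x,L)}\sum_i x_i|\leq t\}\leq \frac{C_1L\mathcal{T}_p(x,L)}{\sqrt n}t$ for all $t\geq\sqrt n$; (c) $\mathcal L(\sum_i b_i\mathbf{Y}_i(p,x,L,s),\sqrt n)\geq c_1L\mathcal{T}_p(x,L)$; (d) $\big|\frac{\sqrt n}{\mathcal{T}_p(x,L)}\sum_i x_i-\sum_i\mathbf{Y}_i(p,x,L,s)\big|\leq C_1\sqrt n$. (Such a vector exists by a randomized rounding argument.) For $n\geq2$, $\delta\in[1/n,1/2]$, $\nu\in(0,1]$ and $T\in(0,1]$ with $\nu/T\geq2$, the set $\mathcal A(n,\delta,\nu,T)=A_1\times\dots\times A_n\subset\mathbb{Z}^n$ is defined by: for $1\leq j\leq\log_2(\delta n)$ and $2^{-j}\delta n<i\leq2^{-j+1}\delta n$, $A_i:=\mathbb{Z}\cap\big[-\lceil\frac{2^{(j+3)/2}}{\sqrt\delta\,T}\rceil-1,\lceil\frac{2^{(j+3)/2}}{\sqrt\delta\,T}\rceil+1\big]\setminus\big[1-\lfloor\frac{\nu}{T}\rfloor,\lfloor\frac{\nu}{T}\rfloor-1\big]$;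 for $i>\delta n$, $A_i:=\mathbb{Z}\cap\big[-\lceil\frac{\sqrt8}{\sqrt\delta\,T}\rceil-1,\lceil\frac{\sqrt8}{\sqrt\delta\,T}\rceil+1\big]$; and $A_1:=\mathbb{Z}\cap\big[-\lceil\frac{2\sqrt n}{T}\rceil-1,\lceil\frac{2\sqrt n}{T}\rceil+1\big]\setminus\big[1-\lfloor\frac{\nu}{T}\rfloor,\lfloor\frac{\nu}{T}\rfloor-1\big]$. *)

theory Defs
  imports "HOL-Probability.Probability"
begin

text \<open>Vectors in R^n are functions nat => real, indexed by {1..n}.\<close>

definition unit_sphere :: "nat \<Rightarrow> (nat \<Rightarrow> real) set" where
  "unit_sphere n = {x. (\<forall>i. i \<notin> {1..n} \<longrightarrow> x i = 0) \<and> (\<Sum>i\<in>{1..n}. (x i)^2) = 1}"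

definition Comp :: "nat \<Rightarrow> real \<Rightarrow> real \<Rightarrow> (nat \<Rightarrow> real) set" where
  "Comp n \<delta> \<nu> = {x \<in> unit_sphere n. \<exists>y::nat \<Rightarrow> real.
      real (card {i\<in>{1..n}. y i \<noteq> 0}) \<le> \<delta> * real n \<and>
      sqrt (\<Sum>i\<in>{1..n}. (x i - y i)^2) \<le> \<nu>}"

definition Incomp :: "nat \<Rightarrow> real \<Rightarrow> real \<Rightarrow> (nat \<Rightarrow> real) set" where
  "Incomp n \<delta> \<nu> = unit_sphere n - Comp n \<delta> \<nu>"

definition levy_conc :: "real pmf \<Rightarrow> real \<Rightarrow> real" where
  "levy_conc M t = (SUP c::real. measure_pmf.prob M {z. \<bar>z - c\<bar> \<le> t})"

definition bern_sum :: "nat \<Rightarrow> real \<Rightarrow> (nat \<Rightarrow> real) \<Rightarrow> real pmf" where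
  "bern_sum n p v = map_pmf (\<lambda>b. \<Sum>i\<in>{1..n}. (if b i then v i else 0))
      (Pi_pmf {1..n} False (\<lambda>_. bernoulli_pmf p))"

definition threshold :: "nat \<Rightarrow> real \<Rightarrow> (nat \<Rightarrow> real) \<Rightarrow> real \<Rightarrow> real" where
  "threshold n p x L = Sup {t. 0 < t \<and> t \<le> 1 \<and> levy_conc (bern_sum n p x) t > L * t}"

text \<open>Properties (a)-(d) of the integer vector Y(p,x,L,s), with constants C1, c1.
  Y n p x L s is the vector for x in R^n.\<close>
definition Y_props :: "real \<Rightarrow> real \<Rightarrow>
    (nat \<Rightarrow> real \<Rightarrow> (nat \<Rightarrow> real) \<Rightarrow> real \<Rightarrow> real \<Rightarrow> (nat \<Rightarrow> int)) \<Rightarrow> bool" where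
  "Y_props C1 c1 Y \<longleftrightarrow>
    (\<forall>n p x L s. 0 < p \<and> p \<le> 1/2 \<and> -1 \<le> s \<and> s \<le> 0 \<and> x \<in> unit_sphere n \<and> L \<ge> 1 \<longrightarrow>
      (let T = threshold n p x L; Yv = Y n p x L s in
        (\<forall>i\<in>{1..n}. \<bar>sqrt n / T * x i - of_int (Yv i)\<bar> \<le> 1) \<and>
        (\<forall>t \<ge> sqrt n. measure_pmf.prob (bern_sum n p (\<lambda>i. of_int (Yv i)))
             {z. \<bar>z + s * sqrt n / T * (\<Sum>i\<in>{1..n}. x i)\<bar> \<le> t}
           \<le> C1 * L * T / sqrt n * t) \<and>
        levy_conc (bern_sum n p (\<lambda>i. of_int (Yv i))) (sqrt n) \<ge> c1 * L * T \<and>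
        \<bar>sqrt n / T * (\<Sum>i\<in>{1..n}. x i) - (\<Sum>i\<in>{1..n}. of_int (Yv i))\<bar> \<le> C1 * sqrt n))"

definition in_A :: "nat \<Rightarrow> real \<Rightarrow> real \<Rightarrow> real \<Rightarrow> (nat \<Rightarrow> int) \<Rightarrow> bool" where
  "in_A n \<delta> \<nu> T y \<longleftrightarrow> (\<forall>i\<in>{1..n}.
     (let k = \<lfloor>\<nu> / T\<rfloor>; excl = (y i \<ge> 1 - k \<and> y i \<le> k - 1) in
      if i = 1 then
        (let B = \<lceil>2 * sqrt n / T\<rceil> + 1 in \<bar>y i\<bar> \<le> B \<and> \<not> excl)
      else if real i > \<delta> * real n then
        \<bar>y i\<bar> \<le> \<lceil>sqrt 8 / (sqrt \<delta> * T)\<rceil> + 1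
      else
        (\<exists>j::nat. 1 \<le> j \<and> real j \<le> log 2 (\<delta> * real n) \<and>
           \<delta> * real n / 2^j < real i \<and> real i \<le> \<delta> * real n / 2^(j-1) \<and>
           \<bar>y i\<bar> \<le> \<lceil>2 powr ((real j + 3)/2) / (sqrt \<delta> * T)\<rceil> + 1 \<and> \<not> excl)))"

end

theory Submission
  imports Defs "HOL-Library.Discrete_Functions" "HOL-Combinatorics.Permutations"
begin

lemma sort_perm:
  fixes f :: "nat \<Rightarrow> real"
  shows "\<exists>\<tau>. \<tau> permutes {1..n} \<and> (\<forall>r\<in>{1..n}. \<forall>r'\<in>{1..n}. r \<le> r' \<longrightarrow> f (\<tau> r) \<le> f (\<tau> r'))"
proof -
  define L where "L = sort_key f [1..<Suc n]"
  have len: "length L = n" by (simp add: L_def length_sort)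
  have dist: "distinct L" by (simp add: L_def)
  have setL: "set L = {1..n}" by (auto simp: L_def set_sort)
  have sor: "sorted (map f L)" by (simp add: L_def)
  define \<tau> where "\<tau> r = (if r \<in> {1..n} then L!(r-1) else r)" for r
  have inj: "inj_on \<tau> {1..n}"
  proof (rule inj_onI)
    fix a b assume a: "a \<in> {1..n}" and b: "b \<in> {1..n}" and e: "\<tau> a = \<tau> b"
    then have "L!(a-1) = L!(b-1)" by (simp add: \<tau>_def)
    moreover have "a - 1 < length L" "b - 1 < length L" using a b len by auto
    ultimately have "a - 1 = b - 1" using dist nth_eq_iff_index_eq by blast
    with a b show "a = b" by auto
  qed
  have img: "\<tau> ` {1..n} = {1..n}"
  proof
    show "\<tau> ` {1..n} \<subseteq> {1..n}"
    proof
      fix y assume "y \<in> \<tau> ` {1..n}"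
      then obtain a where a: "a \<in> {1..n}" "y = \<tau> a" by auto
      then have "y = L!(a-1)" by (simp add: \<tau>_def)
      moreover have "a - 1 < length L" using a len by auto
      ultimately have "y \<in> set L" by simp
      then show "y \<in> {1..n}" using setL by simp
    qed
  next
    show "{1..n} \<subseteq> \<tau> ` {1..n}"
    proof
      fix y assume "y \<in> {1..n}"
      then have "y \<in> set L" using setL by simp
      then obtain i where i: "i < length L" "L!i = y" by (auto simp: in_set_conv_nth)
      then have "Suc i \<in> {1..n}" using len by auto
      moreover have "\<tau> (Suc i) = y" using i len by (simp add: \<tau>_def)
      ultimately show "y \<in> \<tau> ` {1..n}" by (metis imageI)
    qed
  qed
  have perm: "\<tau> permutes {1..n}"
  proof (rule bij_imp_permutes)
    show "bij_betw \<tau> {1..n} {1..n}" unfolding bij_betw_def using inj img by blast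
    show "\<And>x. x \<notin> {1..n} \<Longrightarrow> \<tau> x = x" by (auto simp: \<tau>_def)
  qed
  have mono: "f (\<tau> r) \<le> f (\<tau> r')" if "r \<in> {1..n}" "r' \<in> {1..n}" "r \<le> r'" for r r'
  proof -
    have "(map f L)!(r-1) \<le> (map f L)!(r'-1)"
      by (rule sorted_nth_mono[OF sor]) (use that len in auto)
    then show ?thesis using that len by (simp add: \<tau>_def)
  qed
  show ?thesis using perm mono by blast
qed

definition pw :: "nat \<Rightarrow> nat set" where "pw n = {e\<in>{1..n}. \<exists>t. e = 2^t}"
definition Ecut :: "nat \<Rightarrow> nat \<Rightarrow> nat set" where "Ecut n k = pw n \<union> {k, n}"
definition nxt :: "nat set \<Rightarrow> nat \<Rightarrow> nat" where "nxt E e = Min {e'\<in>E. e < e'}"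
definition rk :: "nat set \<Rightarrow> nat \<Rightarrow> nat" where "rk U c = card {y\<in>U. y \<le> c}"
definition Ifam :: "nat \<Rightarrow> nat set \<Rightarrow> (nat \<Rightarrow> nat set) set" where
  "Ifam n E = (\<lambda>\<tau>. restrict (\<lambda>e. \<tau> ` {1..e}) E) ` {\<tau>. \<tau> permutes {1..n}}"
definition sig :: "nat \<Rightarrow> nat set \<Rightarrow> (nat \<Rightarrow> nat set) \<Rightarrow> (nat \<Rightarrow> nat)" where
  "sig n E W = (SOME \<sigma>. \<sigma> permutes {1..n} \<and> (\<forall>e\<in>E. \<sigma> ` {1..e} = W e))"
definition enc :: "nat \<Rightarrow> nat set \<Rightarrow> (nat \<Rightarrow> nat set) \<Rightarrow> (nat \<Rightarrow> nat set)" where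
  "enc n E W = (\<lambda>e\<in>E-{n}. rk (W (nxt E e)) ` W e)"
definition PPf :: "nat \<Rightarrow> (nat \<Rightarrow> nat) set" where
  "PPf n = (\<Union>k\<in>{1..n}. sig n (Ecut n k) ` Ifam n (Ecut n k))"

lemma rk_inj: "finite U \<Longrightarrow> inj_on (rk U) U"
proof (rule inj_onI, rule ccontr)
  fix a b assume fin: "finite U" and a: "a \<in> U" and b: "b \<in> U" and e: "rk U a = rk U b" and ne: "a \<noteq> b"
  have "rk U a < rk U b" if "a \<in> U" "b \<in> U" "a < b" for a b
  proof -
    have "{y\<in>U. y \<le> a} \<subset> {y\<in>U. y \<le> b}"
    proof
      show "{y\<in>U. y \<le> a} \<subseteq> {y\<in>U. y \<le> b}" using that by auto
      have "b \<in> {y\<in>U. y \<le> b}" "b \<notin> {y\<in>U. y \<le> a}" using that by auto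
      then show "{y\<in>U. y \<le> a} \<noteq> {y\<in>U. y \<le> b}" by blast
    qed
    then show ?thesis unfolding rk_def by (rule psubset_card_mono[rotated]) (use fin in auto)
  qed
  with a b ne e show False by (metis less_irrefl nat_neq_iff)
qed

lemma rk_range: "finite U \<Longrightarrow> c \<in> U \<Longrightarrow> rk U c \<in> {1..card U}"
proof -
  assume fin: "finite U" and c: "c \<in> U"
  have "{y\<in>U. y \<le> c} \<noteq> {}" using c by auto
  then have "rk U c \<ge> 1" using fin unfolding rk_def by (simp add: Suc_le_eq card_gt_0_iff)
  moreover have "rk U c \<le> card U" unfolding rk_def using fin by (intro card_mono) auto
  ultimately show ?thesis by auto
qed

lemma nxt_props:
  assumes "finite E" "n \<in> E" "e < n"
  shows "nxt E e \<in> E" "e < nxt E e" "\<And>e'. e' \<in> E \<Longrightarrow> e < e' \<Longrightarrow> nxt E e \<le> e'"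
proof -
  have ne: "{e'\<in>E. e < e'} \<noteq> {}" using assms by auto
  have fin: "finite {e'\<in>E. e < e'}" using assms by auto
  have "nxt E e \<in> {e'\<in>E. e < e'}" unfolding nxt_def using Min_in[OF fin ne] .
  then show "nxt E e \<in> E" "e < nxt E e" by auto
  show "\<And>e'. e' \<in> E \<Longrightarrow> e < e' \<Longrightarrow> nxt E e \<le> e'" unfolding nxt_def using fin by (intro Min_le) auto
qed

lemma enc_inj:
  assumes fin: "finite E" and sub: "E \<subseteq> {1..n}" and nE: "n \<in> E"
  shows "inj_on (enc n E) (Ifam n E)"
proof (rule inj_onI)
  fix W1 W2 assume w1: "W1 \<in> Ifam n E" and w2: "W2 \<in> Ifam n E" and eq: "enc n E W1 = enc n E W2"
  from w1 obtain \<tau>1 where t1: "\<tau>1 permutes {1..n}" "W1 = restrict (\<lambda>e. \<tau>1 ` {1..e}) E"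
    unfolding Ifam_def by auto
  from w2 obtain \<tau>2 where t2: "\<tau>2 permutes {1..n}" "W2 = restrict (\<lambda>e. \<tau>2 ` {1..e}) E"
    unfolding Ifam_def by auto
  have key: "\<tau>1 ` {1..e} = \<tau>2 ` {1..e}" if "e \<in> E" for e
    using that
  proof (induction "n - e" arbitrary: e rule: less_induct)
    case less
    show ?case
    proof (cases "e = n")
      case True then show ?thesis using permutes_image[OF t1(1)] permutes_image[OF t2(1)] by simp
    next
      case False
      with less.prems sub have en: "e < n" by auto
      note nx = nxt_props[OF fin nE en]
      define e' where "e' = nxt E e"
      have e'n: "e' \<le> n" using nx(1) sub e'_def by auto
      have IH: "\<tau>1 ` {1..e'} = \<tau>2 ` {1..e'}"
        using less.hyps[of e'] nx e'n en e'_def by auto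
      define U where "U = \<tau>1 ` {1..e'}"
      have finU: "finite U" by (simp add: U_def)
      have s1: "\<tau>1 ` {1..e} \<subseteq> U" using nx(2) unfolding U_def e'_def by (intro image_mono) auto
      have s2: "\<tau>2 ` {1..e} \<subseteq> U" using nx(2) IH unfolding U_def e'_def by (metis atLeastatMost_subset_iff image_mono le_refl less_imp_le_nat)
      have "enc n E W1 e = enc n E W2 e" using eq by simp
      then have "rk U ` (\<tau>1 ` {1..e}) = rk U ` (\<tau>2 ` {1..e})"
        using less.prems False nx(1) IH by (simp add: enc_def t1(2) t2(2) U_def e'_def)
      then show ?thesis using inj_on_image_eq_iff[OF rk_inj[OF finU] s1 s2] by simp
    qed
  qed
  show "W1 = W2" unfolding t1(2) t2(2) using key by (intro restrict_ext)
qed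

lemma enc_into:
  assumes fin: "finite E" and sub: "E \<subseteq> {1..n}" and nE: "n \<in> E" and w: "W \<in> Ifam n E"
  shows "enc n E W \<in> PiE (E - {n}) (\<lambda>e. Pow {1..nxt E e})"
proof -
  from w obtain \<tau> where t: "\<tau> permutes {1..n}" "W = restrict (\<lambda>e. \<tau> ` {1..e}) E"
    unfolding Ifam_def by auto
  have "rk (W (nxt E e)) ` W e \<subseteq> {1..nxt E e}" if e: "e \<in> E - {n}" for e
  proof -
    have en: "e < n" using e sub by auto
    note nx = nxt_props[OF fin nE en]
    define U where "U = \<tau> ` {1..nxt E e}"
    have WU: "W (nxt E e) = U" using nx(1) by (simp add: t(2) U_def)
    have cU: "card U = nxt E e" unfolding U_def
      by (subst card_image) (auto intro: permutes_inj_on[OF t(1)])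
    have sub2: "W e \<subseteq> U" using e nx(2) unfolding t(2) U_def by (auto intro: image_mono)
    have "rk U ` W e \<subseteq> {1..card U}" using rk_range[of U] sub2 by (auto simp: U_def)
    then show ?thesis using WU cU by simp
  qed
  then show ?thesis unfolding enc_def by (auto simp: PiE_iff)
qed

lemma card_Ifam:
  assumes fin: "finite E" and sub: "E \<subseteq> {1..n}" and nE: "n \<in> E"
  shows "card (Ifam n E) \<le> 2 ^ (\<Sum>e\<in>E-{n}. nxt E e)"
proof -
  have "card (Ifam n E) \<le> card (PiE (E-{n}) (\<lambda>e. Pow {1..nxt E e}))"
    by (rule card_inj_on_le[OF enc_inj[OF fin sub nE]])
       (use enc_into[OF fin sub nE] fin in \<open>auto intro!: finite_PiE\<close>)
  also have "\<dots> = (\<Prod>e\<in>E-{n}. 2 ^ nxt E e)" by (simp add: card_PiE card_Pow fin)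
  also have "\<dots> = 2 ^ (\<Sum>e\<in>E-{n}. nxt E e)" by (simp add: power_sum)
  finally show ?thesis .
qed

lemma geom2: "(\<Sum>t<m. (2::nat)^t) + 1 = 2^m"
  by (induction m) auto

lemma sum_pw: "(\<Sum>e\<in>pw n. e) \<le> 2 * n"
proof (cases "n = 0")
  case True then show ?thesis by (simp add: pw_def)
next
  case False
  define m where "m = Suc (floor_log n)"
  have sub: "pw n \<subseteq> (\<lambda>t. 2^t) ` {..<m}"
  proof
    fix e assume "e \<in> pw n"
    then obtain t where t: "e = 2^t" "2^t \<le> n" by (auto simp: pw_def)
    have "floor_log (2^t) \<le> floor_log n" using t(2) by (rule floor_log_le_iff)
    then have "t < m" by (simp add: m_def)
    then show "e \<in> (\<lambda>t. 2^t) ` {..<m}" using t by auto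
  qed
  have "(\<Sum>e\<in>pw n. e) \<le> (\<Sum>e\<in>(\<lambda>t. 2^t) ` {..<m}. e)"
    by (rule sum_mono2) (use sub in auto)
  also have "\<dots> = (\<Sum>t<m. (2::nat)^t)"
    by (subst sum.reindex) (auto simp: inj_on_def)
  also have "\<dots> < 2^m" using geom2[of m] by linarith
  also have "2^m \<le> 2 * n" using floor_log_exp2_le[of n] False by (simp add: m_def)
  finally show ?thesis by simp
qed

lemma Ecut_facts:
  assumes "k \<in> {1..n}"
  shows "finite (Ecut n k)" "Ecut n k \<subseteq> {1..n}" "n \<in> Ecut n k" "k \<in> Ecut n k" "pw n \<subseteq> Ecut n k"
  using assms by (auto simp: Ecut_def pw_def)

lemma nxt_le:
  assumes k: "k \<in> {1..n}" and e: "e \<in> Ecut n k" and en: "e < n"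
  shows "nxt (Ecut n k) e \<le> 2 * e"
proof -
  note F = Ecut_facts[OF k]
  note nx = nxt_props[OF F(1) F(3) en]
  have e1: "e \<ge> 1" using e F(2) by auto
  define p :: nat where "p = 2 * 2 ^ floor_log e"
  have pe: "e < p" using floor_log_exp2_gt[of e] by (simp add: p_def)
  have p2: "p \<le> 2 * e" using floor_log_exp2_le[of e] e1 by (simp add: p_def)
  show ?thesis
  proof (cases "p \<le> n")
    case True
    have "p \<in> pw n" using True unfolding pw_def p_def by (auto intro: exI[of _ "Suc (floor_log e)"])
    then have "p \<in> Ecut n k" using F(5) by auto
    then have "nxt (Ecut n k) e \<le> p" using nx(3) pe by auto
    then show ?thesis using p2 by simp
  next
    case False
    have "nxt (Ecut n k) e \<le> n" using nx(3)[OF F(3) en] .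
    then show ?thesis using False p2 by simp
  qed
qed

lemma sum_nxt:
  assumes k: "k \<in> {1..n}"
  shows "(\<Sum>e\<in>Ecut n k - {n}. nxt (Ecut n k) e) \<le> 8 * n"
proof -
  note F = Ecut_facts[OF k]
  have "(\<Sum>e\<in>Ecut n k - {n}. nxt (Ecut n k) e) \<le> (\<Sum>e\<in>Ecut n k - {n}. 2 * e)"
    by (rule sum_mono) (use nxt_le[OF k] F(2) in fastforce)
  also have "\<dots> \<le> (\<Sum>e\<in>Ecut n k. 2 * e)"
    by (rule sum_mono2) (use F(1) in auto)
  also have "\<dots> = 2 * (\<Sum>e\<in>Ecut n k. e)" by (simp add: sum_distrib_left)
  also have "(\<Sum>e\<in>Ecut n k. e) \<le> (\<Sum>e\<in>pw n. e) + (\<Sum>e\<in>{k,n}. e)"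
    unfolding Ecut_def by (subst sum_Un_nat) (auto simp: pw_def)
  also have "(\<Sum>e\<in>{k,n}. e) \<le> k + n" by (cases "k = n") auto
  finally show ?thesis using sum_pw[of n] k by auto
qed

lemma sig_props:
  assumes "W \<in> Ifam n E"
  shows "sig n E W permutes {1..n} \<and> (\<forall>e\<in>E. sig n E W ` {1..e} = W e)"
proof -
  from assms obtain \<tau> where t: "\<tau> permutes {1..n}" "W = restrict (\<lambda>e. \<tau> ` {1..e}) E"
    unfolding Ifam_def by auto
  have "\<exists>\<sigma>. \<sigma> permutes {1..n} \<and> (\<forall>e\<in>E. \<sigma> ` {1..e} = W e)"
    using t by auto
  then show ?thesis unfolding sig_def by (rule someI_ex)
qed

lemma PPf_props:
  assumes n: "n \<ge> 1"
  shows "finite (PPf n)" "real (card (PPf n)) \<le> 512 ^ n" "\<forall>\<sigma>\<in>PPf n. \<sigma> permutes {1..n}"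
proof -
  have finI: "finite (Ifam n E)" for E unfolding Ifam_def by (auto intro: finite_permutations)
  show "finite (PPf n)" unfolding PPf_def using finI by auto
  show "\<forall>\<sigma>\<in>PPf n. \<sigma> permutes {1..n}" unfolding PPf_def using sig_props by blast
  have "card (PPf n) \<le> (\<Sum>k\<in>{1..n}. card (sig n (Ecut n k) ` Ifam n (Ecut n k)))"
    unfolding PPf_def by (rule card_UN_le) auto
  also have "\<dots> \<le> (\<Sum>k\<in>{1..n}. (2::nat) ^ (8 * n))"
  proof (rule sum_mono)
    fix k assume k: "k \<in> {1..n}"
    note F = Ecut_facts[OF k]
    have "card (sig n (Ecut n k) ` Ifam n (Ecut n k)) \<le> card (Ifam n (Ecut n k))"
      by (rule card_image_le[OF finI])
    also have "\<dots> \<le> 2 ^ (\<Sum>e\<in>Ecut n k - {n}. nxt (Ecut n k) e)"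
      by (rule card_Ifam[OF F(1) F(2) F(3)])
    also have "\<dots> \<le> 2 ^ (8 * n)" by (rule power_increasing[OF sum_nxt[OF k]]) simp
    finally show "card (sig n (Ecut n k) ` Ifam n (Ecut n k)) \<le> 2 ^ (8 * n)" .
  qed
  also have "\<dots> = n * 2 ^ (8 * n)" by simp
  also have "\<dots> \<le> 2 ^ n * 2 ^ (8 * n)" using less_exp[of n] by simp
  also have "\<dots> = 512 ^ n"
  proof -
    have "(2::nat) ^ n * 2 ^ (8 * n) = 2 ^ (9 * n)" by (simp add: power_add[symmetric])
    also have "\<dots> = (2 ^ 9) ^ n" by (simp add: power_mult)
    finally show ?thesis by simp
  qed
  finally show "real (card (PPf n)) \<le> 512 ^ n" by (metis of_nat_le_iff of_nat_numeral of_nat_power)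
qed

lemma sqrt_bound:
  fixes n \<delta> T Q x :: real
  assumes T: "0 < T" and d: "0 < \<delta>" and n: "0 \<le> n" and h: "n*\<delta>*x^2 \<le> 2*Q"
  shows "2* sqrt n*\<bar>x\<bar>/T \<le> sqrt(8*Q)/(sqrt \<delta>*T)"
proof -
  have "2* sqrt n*\<bar>x\<bar>* sqrt \<delta> = sqrt((2*\<bar>x\<bar>)^2 * n * \<delta>)"
    by (simp add: real_sqrt_mult)
  also have "\<dots> \<le> sqrt(8*Q)"
    by (rule real_sqrt_le_mono) (use h in \<open>simp add: power_mult_distrib algebra_simps\<close>)
  finally have *: "2* sqrt n*\<bar>x\<bar>* sqrt \<delta> \<le> sqrt(8*Q)" .
  have sd: "sqrt \<delta> > 0" using d by simp
  show ?thesis using * sd T by (simp add: field_simps)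
qed

lemma ceil_bound:
  fixes y :: int and A B :: real
  assumes "real_of_int \<bar>y\<bar> \<le> A + 1" "A \<le> B"
  shows "\<bar>y\<bar> \<le> \<lceil>B\<rceil> + 1"
proof -
  have "real_of_int \<bar>y\<bar> \<le> real_of_int (\<lceil>B\<rceil> + 1)" using assms le_of_int_ceiling[of B] by (simp only: of_int_add of_int_1)
  then show ?thesis by linarith
qed

lemma excl_bound:
  fixes y :: int and a :: real
  assumes "a - 1 < real_of_int \<bar>y\<bar>"
  shows "\<not> (1 - \<lfloor>a\<rfloor> \<le> y \<and> y \<le> \<lfloor>a\<rfloor> - 1)"
proof
  assume "1 - \<lfloor>a\<rfloor> \<le> y \<and> y \<le> \<lfloor>a\<rfloor> - 1"
  then have "\<bar>y\<bar> \<le> \<lfloor>a\<rfloor> - 1" by linarith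
  then have "real_of_int \<bar>y\<bar> \<le> a - 1" using of_int_floor_le[of a] by linarith
  with assms show False by linarith
qed

lemma j_exists:
  fixes D :: real and i :: nat
  assumes "real i \<le> D" "2 \<le> i"
  shows "\<exists>j::nat. 1 \<le> j \<and> real j \<le> log 2 D \<and> D / 2^j < real i \<and> real i \<le> D / 2^(j-1)"
proof -
  have i0: "real i > 0" using assms by simp
  have D0: "D > 0" using assms by simp
  define m where "m = nat \<lfloor>D / i\<rfloor>"
  have Di: "D / i \<ge> 1" using assms i0 by (simp add: field_simps)
  have m1: "m \<ge> 1" using Di unfolding m_def by linarith
  have mle: "real m \<le> D / i" using Di unfolding m_def by linarith
  have mgt: "D / i < real m + 1" using Di unfolding m_def by linarith
  define t where "t = floor_log m"
  have t1: "2^t \<le> m" using floor_log_exp2_le[of m] m1 by (simp add: t_def)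
  have t2: "m + 1 \<le> 2 * 2^t" using floor_log_exp2_gt[of m] by (simp add: t_def)
  have t1r: "(2::real)^t \<le> D / i" using t1 mle by (metis of_nat_le_iff of_nat_numeral of_nat_power order_trans)
  have t2r: "D / i < 2 * (2::real)^t"
  proof -
    have "real (m + 1) \<le> real (2 * 2^t)" using t2 by (simp only: of_nat_le_iff)
    then show ?thesis using mgt by simp
  qed
  show ?thesis
  proof (intro exI conjI)
    show "1 \<le> Suc t" by simp
    have "(2::real)^(Suc t) \<le> D"
    proof -
      have "(2::real)^(Suc t) = 2 * 2^t" by simp
      also have "\<dots> \<le> 2 * (D / i)" using t1r by simp
      also have "\<dots> \<le> D" using assms D0 i0 by (simp add: field_simps)
      finally show ?thesis .
    qed
    then have "2 powr real (Suc t) \<le> D" by (simp only: powr_realpow[of 2, OF zero_less_numeral])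
    then show "real (Suc t) \<le> log 2 D" using le_log_iff[of 2 D "real (Suc t)"] D0 by simp
    show "D / 2 ^ Suc t < real i" using t2r i0 by (simp add: field_simps)
    show "real i \<le> D / 2 ^ (Suc t - 1)" using t1r i0 by (simp add: field_simps)
  qed
qed

lemma incomp_many:
  assumes x: "x \<in> Incomp n \<delta> \<nu>" and nu: "\<nu> > 0"
  shows "real (card {c\<in>{1..n}. \<bar>x c\<bar> > \<nu> / sqrt n}) > \<delta> * real n"
proof (rule ccontr)
  define M where "M = {c\<in>{1..n}. \<bar>x c\<bar> > \<nu> / sqrt n}"
  assume "\<not> ?thesis"
  then have cM: "real (card M) \<le> \<delta> * real n" by (simp add: M_def)
  have xs: "x \<in> unit_sphere n" and nc: "x \<notin> Comp n \<delta> \<nu>" using x by (auto simp: Incomp_def)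
  have "n \<noteq> 0"
  proof
    assume "n = 0" then show False using xs by (simp add: unit_sphere_def)
  qed
  then have n0: "real n > 0" by simp
  define y where "y i = (if i \<in> M then x i else 0)" for i
  have "{i\<in>{1..n}. y i \<noteq> 0} \<subseteq> M" by (auto simp: y_def M_def split: if_splits)
  then have "card {i\<in>{1..n}. y i \<noteq> 0} \<le> card M" by (intro card_mono) (auto simp: M_def)
  then have c1: "real (card {i\<in>{1..n}. y i \<noteq> 0}) \<le> \<delta> * real n" using cM by linarith
  have "(\<Sum>i\<in>{1..n}. (x i - y i)^2) \<le> (\<Sum>i\<in>{1..n}. \<nu>^2 / real n)"
  proof (rule sum_mono)
    fix i assume i: "i \<in> {1..n}"
    show "(x i - y i)^2 \<le> \<nu>^2 / real n"
    proof (cases "i \<in> M")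
      case True then show ?thesis by (simp add: y_def)
    next
      case False
      then have "\<bar>x i\<bar> \<le> \<nu> / sqrt n" using i by (auto simp: M_def)
      then have "\<bar>x i\<bar> \<le> \<bar>\<nu> / sqrt n\<bar>" using nu by simp
      then have "(x i)^2 \<le> (\<nu> / sqrt n)^2" by (metis abs_le_square_iff)
      also have "\<dots> = \<nu>^2 / real n" using n0 by (simp add: power_divide)
      finally show ?thesis using False by (simp add: y_def)
    qed
  qed
  also have "\<dots> = \<nu>^2" using n0 by simp
  finally have "sqrt (\<Sum>i\<in>{1..n}. (x i - y i)^2) \<le> \<nu>"
    using nu by (metis real_sqrt_abs abs_of_pos real_sqrt_le_mono)
  then have "x \<in> Comp n \<delta> \<nu>" using c1 xs unfolding Comp_def by blast
  with nc show False by simp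
qed

lemma rank_bound:
  fixes x :: "nat \<Rightarrow> real"
  assumes t: "\<tau> permutes {1..n}"
    and mono: "\<forall>r\<in>{1..n}. \<forall>r'\<in>{1..n}. r \<le> r' \<longrightarrow> - \<bar>x (\<tau> r)\<bar> \<le> - \<bar>x (\<tau> r')\<bar>"
    and xs: "(\<Sum>i\<in>{1..n}. (x i)^2) = 1" and r: "r \<in> {1..n}"
  shows "real r * (x (\<tau> r))^2 \<le> 1"
proof -
  have "real r * (x (\<tau> r))^2 = (\<Sum>r'\<in>{1..r}. (x (\<tau> r))^2)" by simp
  also have "\<dots> \<le> (\<Sum>r'\<in>{1..r}. (x (\<tau> r'))^2)"
  proof (rule sum_mono)
    fix r' assume r': "r' \<in> {1..r}"
    then have "\<bar>x (\<tau> r)\<bar> \<le> \<bar>x (\<tau> r')\<bar>" using mono r by auto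
    then show "(x (\<tau> r))^2 \<le> (x (\<tau> r'))^2" by (metis abs_le_square_iff)
  qed
  also have "\<dots> = (\<Sum>c\<in>\<tau>`{1..r}. (x c)^2)"
    by (subst sum.reindex) (auto intro: permutes_inj_on[OF t])
  also have "\<dots> \<le> (\<Sum>c\<in>{1..n}. (x c)^2)"
  proof (rule sum_mono2)
    show "\<tau>`{1..r} \<subseteq> {1..n}" using r permutes_image[OF t] by auto
  qed auto
  finally show ?thesis using xs by simp
qed

lemma topk:
  fixes x :: "nat \<Rightarrow> real"
  assumes t: "\<tau> permutes {1..n}"
    and mono: "\<forall>r\<in>{1..n}. \<forall>r'\<in>{1..n}. r \<le> r' \<longrightarrow> - \<bar>x (\<tau> r)\<bar> \<le> - \<bar>x (\<tau> r')\<bar>"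
    and kn: "k \<le> n" and cM: "real (card {c\<in>{1..n}. \<bar>x c\<bar> > a}) > real k"
  shows "\<tau> ` {1..k} \<subseteq> {c\<in>{1..n}. \<bar>x c\<bar> > a}"
proof (rule ccontr)
  define M where "M = {c\<in>{1..n}. \<bar>x c\<bar> > a}"
  assume "\<not> ?thesis"
  then have "\<not> \<tau>`{1..k} \<subseteq> M" by (simp add: M_def)
  then obtain r where r: "r \<in> {1..k}" "\<tau> r \<notin> M" by blast
  have trn: "\<tau> r \<in> {1..n}" using r kn permutes_in_image[OF t] by auto
  then have xr: "\<bar>x (\<tau> r)\<bar> \<le> a" using r(2) by (auto simp: M_def)
  have "M \<subseteq> \<tau> ` {1..r-1}"
  proof
    fix c assume c: "c \<in> M"
    then have "c \<in> \<tau> ` {1..n}" using permutes_image[OF t] by (auto simp: M_def)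
    then obtain r' where r': "r' \<in> {1..n}" "c = \<tau> r'" by auto
    have "r' < r"
    proof (rule ccontr)
      assume "\<not> r' < r"
      then have "\<bar>x c\<bar> \<le> \<bar>x (\<tau> r)\<bar>" using mono r' r kn by force
      then show False using xr c by (auto simp: M_def)
    qed
    then show "c \<in> \<tau> ` {1..r-1}" using r' by auto
  qed
  then have "card M \<le> card (\<tau> ` {1..r-1})" by (intro card_mono) auto
  also have "\<dots> \<le> r - 1" using card_image_le[of "{1..r-1}" \<tau>] by simp
  finally have "card M < k" using r by auto
  then show False using cM by (simp add: M_def)
qed

lemma powr_sqrt_eq: "(2::real) powr ((real j + 3) / 2) = sqrt (8 * 2^j)"
proof -
  have "(8::real) * 2^j = 2 ^ (j + 3)" by (simp add: power_add)
  also have "\<dots> = 2 powr (real j + 3)" by (simp add: powr_realpow[symmetric])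
  finally have "sqrt (8 * 2^j) = (2 powr (real j + 3)) powr (1/2)" by (simp add: powr_half_sqrt)
  also have "\<dots> = 2 powr ((real j + 3) / 2)" by (simp add: powr_powr)
  finally show ?thesis by simp
qed

lemma main_exists:
  fixes Y and n :: nat and x :: "nat \<Rightarrow> real"
  assumes YP: "Y_props C1 c1 Y" and n2: "n \<ge> 2"
    and p: "0 < p" "p \<le> 1/2" and d: "1 / real n \<le> \<delta>" "\<delta> \<le> 1/2"
    and s: "-1 \<le> s" "s \<le> 0" and nu: "0 < \<nu>" "\<nu> \<le> 1" and L: "L \<ge> 1" and T: "T > 0"
    and x: "x \<in> Incomp n \<delta> \<nu>" and th: "T / 2 \<le> threshold n p x L" "threshold n p x L \<le> T"
  shows "\<exists>\<sigma>\<in>PPf n. in_A n \<delta> \<nu> T (\<lambda>i. Y n p x L s (\<sigma> i))"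
proof -
  have xs: "x \<in> unit_sphere n" using x by (simp add: Incomp_def)
  have xsum: "(\<Sum>i\<in>{1..n}. (x i)^2) = 1" using xs by (simp add: unit_sphere_def)
  define T' where "T' = threshold n p x L"
  define Yv where "Yv = Y n p x L s"
  have "(let T = threshold n p x L; Yv = Y n p x L s in
        (\<forall>i\<in>{1..n}. \<bar>sqrt n / T * x i - of_int (Yv i)\<bar> \<le> 1) \<and>
        (\<forall>t \<ge> sqrt n. measure_pmf.prob (bern_sum n p (\<lambda>i. of_int (Yv i)))
             {z. \<bar>z + s * sqrt n / T * (\<Sum>i\<in>{1..n}. x i)\<bar> \<le> t}
           \<le> C1 * L * T / sqrt n * t) \<and>
        levy_conc (bern_sum n p (\<lambda>i. of_int (Yv i))) (sqrt n) \<ge> c1 * L * T \<and>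
        \<bar>sqrt n / T * (\<Sum>i\<in>{1..n}. x i) - (\<Sum>i\<in>{1..n}. of_int (Yv i))\<bar> \<le> C1 * sqrt n)"
    using YP p s xs L unfolding Y_props_def by blast
  then have Ya: "\<forall>i\<in>{1..n}. \<bar>sqrt n / T' * x i - of_int (Yv i)\<bar> \<le> 1"
    unfolding Let_def T'_def Yv_def by blast
  have T'0: "T' > 0" and T'T: "T' \<le> T" and T'2: "T / 2 \<le> T'" using th T by (auto simp: T'_def)
  obtain \<tau> where t: "\<tau> permutes {1..n}"
    and mono: "\<forall>r\<in>{1..n}. \<forall>r'\<in>{1..n}. r \<le> r' \<longrightarrow> - \<bar>x (\<tau> r)\<bar> \<le> - \<bar>x (\<tau> r')\<bar>"
    using sort_perm[of n "\<lambda>c. - \<bar>x c\<bar>"] by blast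
  have n0: "real n > 0" using n2 by simp
  have dn1: "\<delta> * real n \<ge> 1" using d(1) n0 by (simp add: field_simps)
  have d0: "\<delta> > 0" using d(1) n0 by (smt (verit) divide_pos_pos)
  have dnn: "\<delta> * real n \<le> real n" using d(2) n0 by simp
  define k where "k = nat \<lfloor>\<delta> * real n\<rfloor>"
  have kle: "real k \<le> \<delta> * real n" using dn1 unfolding k_def by linarith
  have k1: "k \<ge> 1" using dn1 unfolding k_def by linarith
  have kn: "k \<le> n" using kle dnn by linarith
  have kin: "k \<in> {1..n}" using k1 kn by simp
  define M where "M = {c\<in>{1..n}. \<bar>x c\<bar> > \<nu> / sqrt n}"
  have cM: "real (card M) > \<delta> * real n" using incomp_many[OF x nu(1)] by (simp add: M_def)
  have topM: "\<tau> ` {1..k} \<subseteq> M" unfolding M_def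
    by (rule topk[OF t mono kn]) (use cM kle in \<open>simp add: M_def\<close>)
  define E where "E = Ecut n k"
  note F = Ecut_facts[OF kin, folded E_def]
  define W where "W = restrict (\<lambda>e. \<tau> ` {1..e}) E"
  have WI: "W \<in> Ifam n E" unfolding Ifam_def W_def using t by blast
  define \<sigma> where "\<sigma> = sig n E W"
  have \<sigma>p: "\<sigma> permutes {1..n}" and \<sigma>W0: "\<forall>e\<in>E. \<sigma> ` {1..e} = W e"
    using sig_props[OF WI] by (auto simp: \<sigma>_def)
  have \<sigma>W: "\<sigma> ` {1..e} = \<tau> ` {1..e}" if "e \<in> E" for e using \<sigma>W0 that by (simp add: W_def)
  have \<sigma>PP: "\<sigma> \<in> PPf n" unfolding PPf_def \<sigma>_def E_def using kin WI[unfolded E_def] by blast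
  have main: "in_A n \<delta> \<nu> T (\<lambda>i. Yv (\<sigma> i))"
    unfolding in_A_def
  proof
    fix i assume i: "i \<in> {1..n}"
    define c where "c = \<sigma> i"
    have cn: "c \<in> {1..n}" using i permutes_in_image[OF \<sigma>p] by (simp add: c_def)
    then have "c \<in> \<tau> ` {1..n}" using permutes_image[OF t] by simp
    then obtain r where r: "r \<in> {1..n}" "\<tau> r = c" by auto
    have rb: "real r * (x c)^2 \<le> 1" using rank_bound[OF t mono xsum r(1)] r(2) by simp
    have i2r: "i \<le> 2 * r"
    proof (rule ccontr)
      assume nle: "\<not> i \<le> 2 * r"
      define q :: nat where "q = 2 * 2 ^ floor_log r"
      have rq: "r < q" using floor_log_exp2_gt[of r] by (simp add: q_def)
      have q2: "q \<le> 2 * r" using floor_log_exp2_le[of r] r(1) by (simp add: q_def)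
      have "q \<in> pw n" using rq q2 nle i unfolding pw_def q_def
        by (auto intro: exI[of _ "Suc (floor_log r)"])
      then have qE: "q \<in> E" using F(5) by auto
      have "c \<in> \<tau> ` {1..q}" using r rq by (auto intro!: image_eqI[of _ _ r])
      then have "c \<in> \<sigma> ` {1..q}" using \<sigma>W[OF qE] by simp
      then obtain i' where i': "i' \<in> {1..q}" "\<sigma> i' = \<sigma> i" by (auto simp: c_def)
      then have "i' = i" using permutes_inj[OF \<sigma>p] by (auto dest: injD)
      then show False using i' nle q2 by simp
    qed
    have Yc: "\<bar>sqrt n / T' * x c - of_int (Yv c)\<bar> \<le> 1" using Ya cn by blast
    have sn: "sqrt (real n) \<ge> 0" by simp
    have up: "real_of_int \<bar>Yv c\<bar> \<le> 2 * sqrt n * \<bar>x c\<bar> / T + 1"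
    proof -
      have e: "\<bar>sqrt n / T' * x c\<bar> = sqrt n / T' * \<bar>x c\<bar>" using T'0 by (simp add: abs_mult)
      have "real_of_int \<bar>Yv c\<bar> \<le> sqrt n / T' * \<bar>x c\<bar> + 1"
        using Yc e unfolding of_int_abs by arith
      also have "sqrt n / T' * \<bar>x c\<bar> \<le> 2 * sqrt n * \<bar>x c\<bar> / T"
      proof -
        have "1 / T' \<le> 2 / T" using T'2 T'0 T by (simp add: field_simps)
        then have "sqrt n * \<bar>x c\<bar> * (1 / T') \<le> sqrt n * \<bar>x c\<bar> * (2 / T)"
          by (rule mult_left_mono) simp
        then show ?thesis by (simp add: mult_ac)
      qed
      finally show ?thesis by simp
    qed
    have low: "sqrt n * \<bar>x c\<bar> / T - 1 \<le> real_of_int \<bar>Yv c\<bar>"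
    proof -
      have "sqrt n * \<bar>x c\<bar> / T \<le> sqrt n * \<bar>x c\<bar> / T'"
        using T'T T'0 by (intro divide_left_mono) auto
      also have "\<dots> = \<bar>sqrt n / T' * x c\<bar>" using T'0 by (simp add: abs_mult)
      finally show ?thesis using Yc by linarith
    qed
    have exc: "\<not> (1 - \<lfloor>\<nu> / T\<rfloor> \<le> Yv c \<and> Yv c \<le> \<lfloor>\<nu> / T\<rfloor> - 1)" if ik: "i \<le> k"
    proof (rule excl_bound)
      have "c \<in> \<tau> ` {1..k}" using \<sigma>W[OF F(4)] i ik by (auto simp: c_def)
      then have "c \<in> M" using topM by blast
      then have "\<bar>x c\<bar> > \<nu> / sqrt n" by (simp add: M_def)
      then have "sqrt n * \<bar>x c\<bar> > \<nu>" using n0 by (simp add: field_simps)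
      then have "sqrt n * \<bar>x c\<bar> / T > \<nu> / T" using T by (simp add: divide_strict_right_mono)
      then show "\<nu> / T - 1 < real_of_int \<bar>Yv c\<bar>" using low by linarith
    qed
    show "let k = \<lfloor>\<nu> / T\<rfloor>; excl = (1 - k \<le> Yv (\<sigma> i) \<and> Yv (\<sigma> i) \<le> k - 1) in
      if i = 1 then (let B = \<lceil>2 * sqrt n / T\<rceil> + 1 in \<bar>Yv (\<sigma> i)\<bar> \<le> B \<and> \<not> excl)
      else if real i > \<delta> * real n then
        \<bar>Yv (\<sigma> i)\<bar> \<le> \<lceil>sqrt 8 / (sqrt \<delta> * T)\<rceil> + 1
      else
        (\<exists>j::nat. 1 \<le> j \<and> real j \<le> log 2 (\<delta> * real n) \<and>
           \<delta> * real n / 2^j < real i \<and> real i \<le> \<delta> * real n / 2^(j-1) \<and>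
           \<bar>Yv (\<sigma> i)\<bar> \<le> \<lceil>2 powr ((real j + 3)/2) / (sqrt \<delta> * T)\<rceil> + 1 \<and> \<not> excl)"
    proof (cases "i = 1")
      case True
      have "(x c)^2 \<le> 1" using rb r(1) by (smt (verit) mult_le_cancel_right1 of_nat_1 of_nat_le_iff atLeastAtMost_iff zero_le_power2)
      then have "\<bar>x c\<bar> \<le> 1" by (simp add: abs_square_le_1)
      then have "2 * sqrt n * \<bar>x c\<bar> / T \<le> 2 * sqrt n / T"
        using T sn by (simp add: divide_right_mono mult_left_le)
      then have "\<bar>Yv c\<bar> \<le> \<lceil>2 * sqrt n / T\<rceil> + 1" by (rule ceil_bound[OF up])
      moreover have "i \<le> k" using True k1 by simp
      ultimately show ?thesis using True exc by (simp add: c_def Let_def)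
    next
      case False
      note i1 = False
      show ?thesis
      proof (cases "real i > \<delta> * real n")
        case True
        have "real n * \<delta> * (x c)^2 \<le> 2 * 1"
        proof -
          have "real i \<le> 2 * real r" using i2r by linarith
          then have "real n * \<delta> \<le> 2 * real r" using True by (simp add: mult.commute)
          then have "real n * \<delta> * (x c)^2 \<le> 2 * real r * (x c)^2" by (rule mult_right_mono) simp
          then show ?thesis using rb by simp
        qed
        then have "2 * sqrt n * \<bar>x c\<bar> / T \<le> sqrt (8 * 1) / (sqrt \<delta> * T)"
          by (intro sqrt_bound) (use T d0 n0 in auto)
        then have "\<bar>Yv c\<bar> \<le> \<lceil>sqrt 8 / (sqrt \<delta> * T)\<rceil> + 1" using ceil_bound[OF up] by simp
        then show ?thesis using i1 True by (simp add: c_def Let_def)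
      next
        case False
        have i2: "2 \<le> i" using i i1 by auto
        obtain j where j: "1 \<le> j" "real j \<le> log 2 (\<delta> * real n)" "\<delta> * real n / 2^j < real i"
          "real i \<le> \<delta> * real n / 2^(j-1)"
          using j_exists[of i "\<delta> * real n"] False i2 by force
        have "real n * \<delta> * (x c)^2 \<le> 2 * 2^j"
        proof -
          have "\<delta> * real n < 2^j * real i" using j(3) by (simp add: field_simps)
          also have "\<dots> \<le> 2^j * (2 * real r)" using i2r by simp
          finally have "real n * \<delta> \<le> 2 * 2^j * real r" by (simp add: algebra_simps)
          then have "real n * \<delta> * (x c)^2 \<le> 2 * 2^j * real r * (x c)^2" by (rule mult_right_mono) simp
          also have "\<dots> \<le> 2 * 2^j * 1" using rb by (simp add: mult.assoc)
          finally show ?thesis by simp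
        qed
        then have "2 * sqrt n * \<bar>x c\<bar> / T \<le> sqrt (8 * 2^j) / (sqrt \<delta> * T)"
          by (intro sqrt_bound) (use T d0 n0 in auto)
        then have "\<bar>Yv c\<bar> \<le> \<lceil>2 powr ((real j + 3)/2) / (sqrt \<delta> * T)\<rceil> + 1"
          using ceil_bound[OF up] by (simp add: powr_sqrt_eq)
        moreover have "i \<le> k" using False unfolding k_def by linarith
        ultimately show ?thesis using i1 False j exc by (auto simp: c_def Let_def)
      qed
    qed
  qed
  show ?thesis using \<sigma>PP main by (auto simp: Yv_def)
qed

theorem corollary5p4:
  "\<forall>C1 c1 :: real. C1 > 0 \<and> c1 > 0 \<longrightarrow>
   (\<exists>C0 :: real. C0 > 0 \<and>
     (\<forall>Y. Y_props C1 c1 Y \<longrightarrow>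
       (\<forall>n::nat. n \<ge> 2 \<longrightarrow>
         (\<exists>PP :: (nat \<Rightarrow> nat) set. (\<forall>\<sigma>\<in>PP. \<sigma> permutes {1..n}) \<and> finite PP \<and>
            real (card PP) \<le> C0 ^ n \<and>
            (\<forall>p \<delta> s \<nu> L T x. 0 < p \<and> p \<le> 1/2 \<and> 1 / real n \<le> \<delta> \<and> \<delta> \<le> 1/2 \<and>
               -1 \<le> s \<and> s \<le> 0 \<and> 0 < \<nu> \<and> \<nu> \<le> 1 \<and> L \<ge> 1 \<and> T > 0 \<and>
               x \<in> Incomp n \<delta> \<nu> \<and> T / 2 \<le> threshold n p x L \<and> threshold n p x L \<le> T \<longrightarrow>
               (\<exists>\<sigma>\<in>PP. in_A n \<delta> \<nu> T (\<lambda>i. Y n p x L s (\<sigma> i))))))))"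
proof (intro allI impI)
  fix C1 c1 :: real
  show "\<exists>C0 :: real. C0 > 0 \<and>
     (\<forall>Y. Y_props C1 c1 Y \<longrightarrow>
       (\<forall>n::nat. n \<ge> 2 \<longrightarrow>
         (\<exists>PP :: (nat \<Rightarrow> nat) set. (\<forall>\<sigma>\<in>PP. \<sigma> permutes {1..n}) \<and> finite PP \<and>
            real (card PP) \<le> C0 ^ n \<and>
            (\<forall>p \<delta> s \<nu> L T x. 0 < p \<and> p \<le> 1/2 \<and> 1 / real n \<le> \<delta> \<and> \<delta> \<le> 1/2 \<and>
               -1 \<le> s \<and> s \<le> 0 \<and> 0 < \<nu> \<and> \<nu> \<le> 1 \<and> L \<ge> 1 \<and> T > 0 \<and>
               x \<in> Incomp n \<delta> \<nu> \<and> T / 2 \<le> threshold n p x L \<and> threshold n p x L \<le> T \<longrightarrow>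
               (\<exists>\<sigma>\<in>PP. in_A n \<delta> \<nu> T (\<lambda>i. Y n p x L s (\<sigma> i)))))))"
  proof (intro exI[of _ 512] conjI allI impI)
    fix Y and n :: nat
    assume YP: "Y_props C1 c1 Y" and n2: "n \<ge> 2"
    have n1: "n \<ge> 1" using n2 by simp
    show "\<exists>PP :: (nat \<Rightarrow> nat) set. (\<forall>\<sigma>\<in>PP. \<sigma> permutes {1..n}) \<and> finite PP \<and>
            real (card PP) \<le> 512 ^ n \<and>
            (\<forall>p \<delta> s \<nu> L T x. 0 < p \<and> p \<le> 1/2 \<and> 1 / real n \<le> \<delta> \<and> \<delta> \<le> 1/2 \<and>
               -1 \<le> s \<and> s \<le> 0 \<and> 0 < \<nu> \<and> \<nu> \<le> 1 \<and> L \<ge> 1 \<and> T > 0 \<and>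
               x \<in> Incomp n \<delta> \<nu> \<and> T / 2 \<le> threshold n p x L \<and> threshold n p x L \<le> T \<longrightarrow>
               (\<exists>\<sigma>\<in>PP. in_A n \<delta> \<nu> T (\<lambda>i. Y n p x L s (\<sigma> i))))"
    proof (intro exI[of _ "PPf n"] conjI allI impI)
      show "\<forall>\<sigma>\<in>PPf n. \<sigma> permutes {1..n}" using PPf_props[OF n1] by blast
      show "finite (PPf n)" using PPf_props[OF n1] by blast
      show "real (card (PPf n)) \<le> 512 ^ n" using PPf_props[OF n1] by blast
      fix p \<delta> s \<nu> L T :: real and x :: "nat \<Rightarrow> real"
      assume H: "0 < p \<and> p \<le> 1/2 \<and> 1 / real n \<le> \<delta> \<and> \<delta> \<le> 1/2 \<and>
               -1 \<le> s \<and> s \<le> 0 \<and> 0 < \<nu> \<and> \<nu> \<le> 1 \<and> L \<ge> 1 \<and> T > 0 \<and>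
               x \<in> Incomp n \<delta> \<nu> \<and> T / 2 \<le> threshold n p x L \<and> threshold n p x L \<le> T"
      show "\<exists>\<sigma>\<in>PPf n. in_A n \<delta> \<nu> T (\<lambda>i. Y n p x L s (\<sigma> i))"
        using H by (intro main_exists[OF YP n2]) auto
    qed
  qed simp
qed

end
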